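(* For every $n\in\mathbb N$, in the field $\mathbb Q(x)$ we have $$\frac{U_n}{U_{n+1}}=\left[0;2x-1,1,\underbrace{2(x-1),1,2(x-1),1,\dots,2(x-1),1}_{n\text{ copies of the pair }2(x-1),1}\right].$$
   Context: $U_n=U_n(x)$ denotes the Chebyshev polynomial of the second kind: $U_0=1$, $U_1=2x$, $U_{n+1}=2xU_n-U_{n-1}$ for $n\ge1$. For elements $a_0,a_1,\dots,a_m$ the finite continued fraction is $[a_0;a_1,\dots,a_m]=a_0+\cfrac{1}{a_1+\cfrac{1}{\ddots+\cfrac{1}{a_m}}}$. *)

theory Defs
  imports "HOL-Computational_Algebra.Polynomial" "HOL-Computational_Algebra.Fraction_Field"
begin

text \<open>The field Q(x) is rendered as the fraction field of rat poly: type rat poly fract.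
  The indeterminate x is the polynomial [:0, 1:] embedded via emb (p maps to p/1).\<close>

fun chebU :: "nat \<Rightarrow> rat poly" where
  "chebU 0 = 1"
| "chebU (Suc 0) = [:0, 2:]"
| "chebU (Suc (Suc n)) = [:0, 2:] * chebU (Suc n) - chebU n"

fun cfrac :: "'a::field list \<Rightarrow> 'a" where
  "cfrac [] = 0"
| "cfrac [a] = a"
| "cfrac (a # b # l) = a + 1 / cfrac (b # l)"

definition emb :: "rat poly \<Rightarrow> rat poly fract" where
  "emb p = Fract p 1"

definition X :: "rat poly fract" where
  "X = emb [:0, 1:]"

end

theory Submission
  imports Defs
begin

fun prevU :: "nat \<Rightarrow> rat poly" where
  "prevU 0 = 0"
| "prevU (Suc n) = chebU n"

definition chebV :: "nat \<Rightarrow> rat poly" where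
  "chebV n = chebU n - prevU n"

lemma chebU_rec: "chebU (Suc n) = [:0, 2:] * chebU n - prevU n"
  by (cases n) auto

lemma chebU_at1: "poly (chebU n) 1 = of_nat n + 1"
  by (induction n rule: chebU.induct) (auto simp: algebra_simps)

lemma chebU_nz: "chebU n \<noteq> 0"
  using chebU_at1[of n] by (metis add_nonneg_pos of_nat_0_le_iff poly_0 zero_less_one less_irrefl)

lemma chebV_nz: "chebV n \<noteq> 0"
proof
  assume "chebV n = 0"
  hence "poly (chebV n) 1 = 0" by simp
  moreover have "poly (chebV n) 1 = 1"
    by (cases n) (auto simp: chebV_def chebU_at1)
  ultimately show False by simp
qed

lemma emb_add: "emb (p + q) = emb p + emb q" by (simp add: emb_def)
lemma emb_diff: "emb (p - q) = emb p - emb q" by (simp add: emb_def)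
lemma emb_mult: "emb (p * q) = emb p * emb q" by (simp add: emb_def)
lemma emb_1: "emb 1 = 1" by (simp add: emb_def One_fract_def)
lemma emb_eq0: "(emb p = 0) = (p = 0)" by (simp add: emb_def Zero_fract_def eq_fract)

lemma X2: "2 * X = emb [:0, 2:]"
proof -
  have "emb [:0,2:] = emb ([:0,1:] + [:0,1:])" by simp
  also have "\<dots> = X + X" by (simp only: emb_add X_def)
  finally show ?thesis by simp
qed

lemma polyV: "chebV (Suc n) = ([:0,2:] - 2) * chebU n + chebV n"
  by (simp add: chebV_def chebU_rec algebra_simps)

lemma polyU: "chebU (Suc n) = ([:0,2:] - 1) * chebU n + chebV n"
  by (simp add: chebV_def chebU_rec algebra_simps)

lemma tail: "cfrac (1 # concat (replicate n [2 * (X - 1), 1])) = emb (chebU n) / emb (chebV n)"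
proof (induction n)
  case 0
  then show ?case by (simp add: chebV_def emb_1)
next
  case (Suc n)
  have U: "emb (chebU n) \<noteq> 0" using chebU_nz emb_eq0 by blast
  have V: "emb (chebV n) \<noteq> 0" using chebV_nz emb_eq0 by blast
  have V': "emb (chebV (Suc n)) \<noteq> 0" using chebV_nz emb_eq0 by blast
  have e2: "emb 2 = 2" by (metis emb_1 emb_add one_add_one)
  have a: "2 * (X - 1) = emb ([:0,2:] - 2)" by (simp add: emb_diff X2[symmetric] e2 algebra_simps)
  have b: "emb (chebV (Suc n)) = emb ([:0,2:] - 2) * emb (chebU n) + emb (chebV n)"
    by (simp add: polyV emb_add emb_mult)
  have c: "emb (chebU (Suc n)) = emb (chebU n) + emb (chebV (Suc n))"
    by (simp add: chebV_def chebU_rec emb_add emb_diff algebra_simps)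
  have "cfrac (1 # concat (replicate (Suc n) [2 * (X - 1), 1]))
      = 1 + 1 / (2 * (X - 1) + 1 / cfrac (1 # concat (replicate n [2 * (X - 1), 1])))"
    by simp
  also have "\<dots> = 1 + 1 / (emb ([:0,2:] - 2) + emb (chebV n) / emb (chebU n))"
    by (simp only: Suc.IH a[symmetric]) simp
  also have "emb ([:0,2:] - 2) + emb (chebV n) / emb (chebU n) = emb (chebV (Suc n)) / emb (chebU n)"
    using U by (simp add: b field_simps)
  also have "1 + 1 / (emb (chebV (Suc n)) / emb (chebU n)) = emb (chebU (Suc n)) / emb (chebV (Suc n))"
    using U V' by (simp add: c field_simps)
  finally show ?case .
qed

theorem theorem1p4:
  fixes n :: nat
  shows "emb (chebU n) / emb (chebU (Suc n)) =
    cfrac (0 # (2 * X - 1) # 1 # concat (replicate n [2 * (X - 1), 1]))"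
proof -
  have U: "emb (chebU n) \<noteq> 0" using chebU_nz emb_eq0 by blast
  have V: "emb (chebV n) \<noteq> 0" using chebV_nz emb_eq0 by blast
  have a: "2 * X - 1 = emb ([:0,2:] - 1)" by (simp add: emb_diff X2 emb_1)
  have b: "emb (chebU (Suc n)) = emb ([:0,2:] - 1) * emb (chebU n) + emb (chebV n)"
    by (simp add: polyU emb_add emb_mult)
  have "cfrac (0 # (2 * X - 1) # 1 # concat (replicate n [2 * (X - 1), 1]))
     = 1 / (emb ([:0,2:] - 1) + 1 / (emb (chebU n) / emb (chebV n)))"
    by (simp add: tail[symmetric] a)
  also have "\<dots> = emb (chebU n) / emb (chebU (Suc n))"
    using U V by (simp add: b field_simps)
  finally show ?thesis by simp
qed

end
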